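(* Let $U=(E,\mathcal{D},\rho)$ be a U-matroid. If $A\in\mathcal{D}$ and $\rho(A)=|A|=\rho(E)$, then $A$ is a basis of $U$.
   Context: A U-matroid is a triple $(E,\mathcal{D},\rho)$ with $E$ finite, $\mathcal{D}\subseteq 2^E$ an accessible distributive lattice of sets, and $\rho:\mathcal{D}\to\mathbb{N}$ with $\rho(\emptyset)=0$, monotone, submodular, with unit increase. A basis of $U$ is the support of a vertex of the base polyhedron $\{\mathbf{x}\in\mathbb{R}^E:\mathbf{x}(A)\le\rho(A)\ \forall A\in\mathcal{D},\ \mathbf{x}(E)=\rho(E)\}$. *)

theory Defs
  imports Main "HOL-Analysis.Analysis"
begin

definition accessible_distributive_lattice :: "'a set \<Rightarrow> 'a set set \<Rightarrow> bool" where
  "accessible_distributive_lattice E D \<longleftrightarrow>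
     D \<subseteq> Pow E \<and> {} \<in> D \<and> E \<in> D \<and>
     (\<forall>A\<in>D. \<forall>B\<in>D. A \<union> B \<in> D \<and> A \<inter> B \<in> D) \<and>
     (\<forall>A\<in>D. A \<noteq> {} \<longrightarrow> (\<exists>a\<in>A. A - {a} \<in> D))"

definition U_matroid :: "'a set \<Rightarrow> 'a set set \<Rightarrow> ('a set \<Rightarrow> nat) \<Rightarrow> bool" where
  "U_matroid E D \<rho> \<longleftrightarrow>
     finite E \<and> accessible_distributive_lattice E D \<and>
     \<rho> {} = 0 \<and>
     (\<forall>A\<in>D. \<forall>B\<in>D. A \<subseteq> B \<longrightarrow> \<rho> A \<le> \<rho> B) \<and>
     (\<forall>A\<in>D. \<forall>B\<in>D. \<rho> (A \<union> B) + \<rho> (A \<inter> B) \<le> \<rho> A + \<rho> B) \<and>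
     (\<forall>A\<in>D. \<forall>B\<in>D. A \<subseteq> B \<and> card (B - A) = 1 \<longrightarrow> \<rho> B \<le> \<rho> A + 1)"

text \<open>Vectors in R^E are functions 'a \<Rightarrow> real vanishing outside E.\<close>

definition base_polyhedron :: "'a set \<Rightarrow> 'a set set \<Rightarrow> ('a set \<Rightarrow> nat) \<Rightarrow> ('a \<Rightarrow> real) set" where
  "base_polyhedron E D \<rho> =
     {x. (\<forall>e. e \<notin> E \<longrightarrow> x e = 0) \<and>
         (\<forall>A\<in>D. sum x A \<le> real (\<rho> A)) \<and> sum x E = real (\<rho> E)}"

definition vertex_of :: "('a \<Rightarrow> real) \<Rightarrow> ('a \<Rightarrow> real) set \<Rightarrow> bool" where
  "vertex_of x P \<longleftrightarrow> x \<in> P \<and>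
     (\<forall>y\<in>P. \<forall>z\<in>P. \<forall>t::real. 0 < t \<and> t < 1 \<and> x = (\<lambda>e. t * y e + (1 - t) * z e) \<longrightarrow> y = z)"

definition support :: "'a set \<Rightarrow> ('a \<Rightarrow> real) \<Rightarrow> 'a set" where
  "support E x = {e\<in>E. x e \<noteq> 0}"

definition U_basis :: "'a set \<Rightarrow> 'a set set \<Rightarrow> ('a set \<Rightarrow> nat) \<Rightarrow> 'a set \<Rightarrow> bool" where
  "U_basis E D \<rho> B \<longleftrightarrow>
     (\<exists>x. vertex_of x (base_polyhedron E D \<rho>) \<and> B = support E x)"

end

theory Submission
  imports Defs
begin

lemma um_facts:
  assumes "U_matroid E D \<rho>"
  shows "finite E" "D \<subseteq> Pow E" "{} \<in> D" "E \<in> D"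
    "\<And>A B. A \<in> D \<Longrightarrow> B \<in> D \<Longrightarrow> A \<union> B \<in> D"
    "\<And>A B. A \<in> D \<Longrightarrow> B \<in> D \<Longrightarrow> A \<inter> B \<in> D"
    "\<And>A. A \<in> D \<Longrightarrow> A \<noteq> {} \<Longrightarrow> \<exists>a\<in>A. A - {a} \<in> D"
    "\<rho> {} = 0"
    "\<And>A B. A \<in> D \<Longrightarrow> B \<in> D \<Longrightarrow> A \<subseteq> B \<Longrightarrow> \<rho> A \<le> \<rho> B"
    "\<And>A B. A \<in> D \<Longrightarrow> B \<in> D \<Longrightarrow> \<rho> (A \<union> B) + \<rho> (A \<inter> B) \<le> \<rho> A + \<rho> B"
    "\<And>A B. A \<in> D \<Longrightarrow> B \<in> D \<Longrightarrow> A \<subseteq> B \<Longrightarrow> card (B - A) = 1 \<Longrightarrow> \<rho> B \<le> \<rho> A + 1"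
  using assms unfolding U_matroid_def accessible_distributive_lattice_def by simp_all

lemma um_fin:
  assumes "U_matroid E D \<rho>" "B \<in> D" shows "finite B"
  using um_facts(1,2)[OF assms(1)] assms(2) by (meson PowD finite_subset subsetD)

lemma um_upper:
  assumes U: "U_matroid E D \<rho>"
  shows "B \<in> D \<Longrightarrow> \<rho> B \<le> card B"
proof (induction "card B" arbitrary: B rule: less_induct)
  case less
  show ?case
  proof (cases "B = {}")
    case True then show ?thesis using um_facts(8)[OF U] by simp
  next
    case False
    then obtain b where b: "b \<in> B" "B - {b} \<in> D" using um_facts(7)[OF U less(2)] by blast
    have fB: "finite B" using um_fin[OF U less(2)] .
    have c: "card (B - {b}) < card B" using b fB by (meson card_Diff1_less)
    have "\<rho> (B - {b}) \<le> card (B - {b})" using less(1)[OF c b(2)] .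
    moreover have "B - (B - {b}) = {b}" using b by auto
    then have "\<rho> B \<le> \<rho> (B - {b}) + 1" using um_facts(11)[OF U b(2) less(2)] by auto
    moreover have "card (B - {b}) + 1 = card B" using b fB
      by (metis Suc_eq_plus1 card_Suc_Diff1)
    ultimately show ?thesis by linarith
  qed
qed

lemma um_lower:
  assumes U: "U_matroid E D \<rho>"
  shows "A \<in> D \<Longrightarrow> \<rho> A = card A \<Longrightarrow> C \<in> D \<Longrightarrow> C \<subseteq> A \<Longrightarrow> card C \<le> \<rho> C"
proof (induction "card A" arbitrary: A C rule: less_induct)
  case less
  show ?case
  proof (cases "A = {}")
    case True then show ?thesis using less by simp
  next
    case False
    then obtain b where b: "b \<in> A" "A - {b} \<in> D" using um_facts(7)[OF U less(2)] by blast
    have fA: "finite A" using um_fin[OF U less(2)] .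
    have c: "card (A - {b}) < card A" using b fA by (meson card_Diff1_less)
    have cc: "card (A - {b}) + 1 = card A" using b fA
      by (metis Suc_eq_plus1 card_Suc_Diff1)
    have "A - (A - {b}) = {b}" using b by auto
    then have "\<rho> A \<le> \<rho> (A - {b}) + 1" using um_facts(11)[OF U b(2) less(2)] by auto
    moreover have "\<rho> (A - {b}) \<le> card (A - {b})" using um_upper[OF U b(2)] .
    ultimately have tA': "\<rho> (A - {b}) = card (A - {b})" using less(3) cc by linarith
    show ?thesis
    proof (cases "b \<in> C")
      case False
      then have "C \<subseteq> A - {b}" using less(5) by auto
      then show ?thesis using less(1)[OF c b(2) tA' less(4)] by blast
    next
      case True
      have i: "C \<inter> (A - {b}) = C - {b}" using less(5) by auto
      have u: "C \<union> (A - {b}) = A" using less(5) True b by auto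
      have CbD: "C - {b} \<in> D" using um_facts(6)[OF U less(4) b(2)] i by simp
      have "card (C - {b}) \<le> \<rho> (C - {b})"
        using less(1)[OF c b(2) tA' CbD] less(5) by blast
      moreover have "\<rho> A + \<rho> (C - {b}) \<le> \<rho> C + \<rho> (A - {b})"
        using um_facts(10)[OF U less(4) b(2)] i u by simp
      moreover have "card (C - {b}) + 1 = card C" using True um_fin[OF U less(4)]
        by (metis Suc_eq_plus1 card_Suc_Diff1)
      ultimately show ?thesis using less(3) tA' cc by linarith
    qed
  qed
qed

lemma um_determ:
  fixes x y :: "'a \<Rightarrow> real"
  assumes U: "U_matroid E D \<rho>"
    and h: "\<And>B. B \<in> D \<Longrightarrow> sum y B = sum x B"
  shows "B \<in> D \<Longrightarrow> \<forall>e\<in>B. y e = x e"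
proof (induction "card B" arbitrary: B rule: less_induct)
  case less
  show ?case
  proof (cases "B = {}")
    case True then show ?thesis by simp
  next
    case False
    then obtain b where b: "b \<in> B" "B - {b} \<in> D" using um_facts(7)[OF U less(2)] by blast
    have fB: "finite B" using um_fin[OF U less(2)] .
    have c: "card (B - {b}) < card B" using b fB by (meson card_Diff1_less)
    have IH: "\<forall>e\<in>B - {b}. y e = x e" using less(1)[OF c b(2)] .
    have "sum y (B - {b}) = sum x (B - {b})" using IH by (intro sum.cong) auto
    moreover have "sum y B = y b + sum y (B - {b})" using b fB by (simp add: sum.remove)
    moreover have "sum x B = x b + sum x (B - {b})" using b fB by (simp add: sum.remove)
    ultimately have "y b = x b" using h[OF less(2)] by linarith
    then show ?thesis using IH by auto
  qed
qed

lemma tight: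
  fixes t :: real
  assumes "sy \<le> r" "sz \<le> r" "0 < t" "t < 1" "sx = t * sy + (1 - t) * sz" "sx = r"
  shows "sy = r"
proof (rule ccontr)
  assume "sy \<noteq> r"
  then have "sy < r" using assms by simp
  then have "t * sy < t * r" using assms by simp
  moreover have "(1 - t) * sz \<le> (1 - t) * r" using assms by (intro mult_left_mono) auto
  ultimately show False using assms by (simp add: algebra_simps)
qed

theorem corollary3p7:
  fixes E :: "'a set" and D :: "'a set set" and \<rho> :: "'a set \<Rightarrow> nat" and A :: "'a set"
  assumes "U_matroid E D \<rho>"
    and "A \<in> D"
    and "\<rho> A = card A"
    and "card A = \<rho> E"
  shows "U_basis E D \<rho> A"
proof -
  note U = assms(1)
  define x :: "'a \<Rightarrow> real" where "x = (\<lambda>e. if e \<in> A then 1 else 0)"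
  have AE: "A \<subseteq> E" using um_facts(2)[OF U] assms(2) by auto
  have sx: "sum x B = real (card (A \<inter> B))" if "finite B" for B
  proof -
    have "sum x B = sum (\<lambda>_. 1::real) (B \<inter> A)"
      unfolding x_def using that by (simp add: sum.If_cases)
    then show ?thesis by (simp add: Int_commute)
  qed
  have tightA: "sum x B = real (\<rho> B)" if "B \<in> D" "A \<subseteq> B" for B
  proof -
    have "\<rho> A \<le> \<rho> B" "\<rho> B \<le> \<rho> E" using um_facts(9)[OF U] that assms(2) um_facts(2,4)[OF U] by auto
    then have "\<rho> B = card A" using assms by simp
    moreover have "A \<inter> B = A" using that by auto
    ultimately show ?thesis using sx um_fin[OF U that(1)] by simp
  qed
  have tightI: "sum x (A \<inter> B) = real (\<rho> (A \<inter> B))" if "B \<in> D" for B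
  proof -
    have D1: "A \<inter> B \<in> D" using um_facts(6)[OF U assms(2) that] .
    have "card (A \<inter> B) \<le> \<rho> (A \<inter> B)" using um_lower[OF U assms(2,3) D1] by auto
    moreover have "\<rho> (A \<inter> B) \<le> card (A \<inter> B)" using um_upper[OF U D1] .
    ultimately show ?thesis using sx[of "A \<inter> B"] um_fin[OF U D1] by simp
  qed
  have xP: "x \<in> base_polyhedron E D \<rho>"
    unfolding base_polyhedron_def
  proof (intro CollectI conjI allI impI ballI)
    fix e assume "e \<notin> E" then show "x e = 0" using AE unfolding x_def by auto
  next
    fix B assume B: "B \<in> D"
    have D1: "A \<inter> B \<in> D" using um_facts(6)[OF U assms(2) B] .
    have "\<rho> (A \<inter> B) \<le> \<rho> B" using um_facts(9)[OF U D1 B] by auto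
    moreover have "card (A \<inter> B) \<le> \<rho> (A \<inter> B)" using um_lower[OF U assms(2,3) D1] by auto
    ultimately show "sum x B \<le> real (\<rho> B)" using sx um_fin[OF U B] by simp
  next
    show "sum x E = real (\<rho> E)" using tightA[OF um_facts(4)[OF U] AE] .
  qed
  have key: "y = x" if yP: "y \<in> base_polyhedron E D \<rho>"
    and tt: "\<And>B. B \<in> D \<Longrightarrow> sum x B = real (\<rho> B) \<Longrightarrow> sum y B = real (\<rho> B)" for y
  proof -
    have h: "sum y B = sum x B" if B: "B \<in> D" for B
    proof -
      have D1: "A \<inter> B \<in> D" using um_facts(6)[OF U assms(2) B] .
      have D2: "A \<union> B \<in> D" using um_facts(5)[OF U assms(2) B] .
      have fB: "finite B" using um_fin[OF U B] .
      have fA: "finite A" using um_fin[OF U assms(2)] .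
      have e1: "sum y (A \<inter> B) = sum x (A \<inter> B)" using tt[OF D1 tightI[OF B]] tightI[OF B] by simp
      have e2: "sum y (A \<union> B) = sum x (A \<union> B)" using tt[OF D2 tightA[OF D2]] tightA[OF D2] by auto
      have e3: "sum y A = sum x A" using tt[OF assms(2) tightA[OF assms(2)]] tightA[OF assms(2)] by auto
      have "sum y (A \<union> B) + sum y (A \<inter> B) = sum y A + sum y B" using sum.union_inter[OF fA fB] by simp
      moreover have "sum x (A \<union> B) + sum x (A \<inter> B) = sum x A + sum x B" using sum.union_inter[OF fA fB] by simp
      ultimately show ?thesis using e1 e2 e3 by linarith
    qed
    have "\<forall>e\<in>E. y e = x e" using um_determ[OF U h um_facts(4)[OF U]] .
    moreover have "\<forall>e. e \<notin> E \<longrightarrow> y e = 0" using yP unfolding base_polyhedron_def by auto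
    moreover have "\<forall>e. e \<notin> E \<longrightarrow> x e = 0" using xP unfolding base_polyhedron_def by auto
    ultimately show ?thesis by (metis ext)
  qed
  have vx: "vertex_of x (base_polyhedron E D \<rho>)"
    unfolding vertex_of_def
  proof (intro conjI ballI allI impI)
    show "x \<in> base_polyhedron E D \<rho>" using xP .
  next
    fix y z and t :: real
    assume y: "y \<in> base_polyhedron E D \<rho>" and z: "z \<in> base_polyhedron E D \<rho>"
      and H: "0 < t \<and> t < 1 \<and> x = (\<lambda>e. t * y e + (1 - t) * z e)"
    have comb: "sum x B = t * sum y B + (1 - t) * sum z B" for B
      using H by (simp add: sum.distrib sum_distrib_left)
    have yB: "sum y B \<le> real (\<rho> B)" if "B \<in> D" for B using y that unfolding base_polyhedron_def by auto
    have zB: "sum z B \<le> real (\<rho> B)" if "B \<in> D" for B using z that unfolding base_polyhedron_def by auto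
    have "y = x"
    proof (rule key[OF y])
      fix B assume "B \<in> D" "sum x B = real (\<rho> B)"
      then show "sum y B = real (\<rho> B)"
        using tight[OF yB zB _ _ comb] H by blast
    qed
    moreover have "z = x"
    proof (rule key[OF z])
      fix B assume "B \<in> D" "sum x B = real (\<rho> B)"
      moreover have c2: "sum x B = (1 - t) * sum z B + (1 - (1 - t)) * sum y B" using comb[of B] by simp
      ultimately show "sum z B = real (\<rho> B)"
        using tight[OF zB yB _ _ c2] H by auto
    qed
    ultimately show "y = z" by simp
  qed
  have "support E x = A" unfolding support_def x_def using AE by auto
  then show ?thesis unfolding U_basis_def using vx by metis
qed

end
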